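(* Assume there exists $\theta>0$ with $\psi(\theta)=\log E\exp(\theta X_1)<\infty$. Fix $\epsilon\in(0,\mu)$ and, for the $s$-th system, let $$\kappa(A)=\inf\{k\ge1:\ |A_{n+1}|\ge n(\mu-\epsilon)/s\ \text{for all } n\ge k\}.$$ Then $E\kappa(A)=O(s)$ as $s\to\infty$.
   Context: Let $(X_n)_{n\ge1}$ be i.i.d. strictly positive interarrival times with mean $\mu\in(0,\infty)$. For $s\in\{1,2,\dots\}$, the arrival epochs of the $s$-th system form a time-stationary renewal process on $\mathbb R$ with interarrival times distributed as $X_1/s$; the epochs in $(-\infty,0]$, counted backwards from $0$, are $0\ge A_1>A_2>\cdots$ with $A_n-A_{n+1}=X_n/s$, where $|A_1|$ has the stationary-excess distribution of $X_1/s$ and is independent of $(X_n)$. $\inf\emptyset=\infty$. *)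

theory Defs
  imports "HOL-Probability.Probability"
begin

text \<open>Density of the stationary-excess (equilibrium) distribution of a nonnegative
  random variable Z with finite positive mean: x maps to P(Z > x) / E Z on [0, infinity).\<close>
definition stat_excess_density :: "'a measure \<Rightarrow> ('a \<Rightarrow> real) \<Rightarrow> real \<Rightarrow> ennreal" where
  "stat_excess_density M Z x =
     (if 0 \<le> x then ennreal (measure M {\<omega> \<in> space M. Z \<omega> > x} / integral\<^sup>L M Z) else 0)"

text \<open>Arrival epochs of the s-th system, counted backwards from 0 (index n \<ge> 1):
  A_1 = - Y s, and A_n - A_(n+1) = X_n / s. The paper's X_1, X_2, ... are X 0, X 1, ...
  here, and Y s is the paper's |A_1| for the s-th system.\<close>
definition arrival :: "(nat \<Rightarrow> 'a \<Rightarrow> real) \<Rightarrow> (nat \<Rightarrow> 'a \<Rightarrow> real) \<Rightarrow> nat \<Rightarrow> nat \<Rightarrow> 'a \<Rightarrow> real" where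
  "arrival X Y s n \<omega> = - Y s \<omega> - (\<Sum>i<n - 1. X i \<omega>) / real s"

text \<open>kappa(A) = inf {k \<ge> 1 : |A_(n+1)| \<ge> n (mu - eps) / s for all n \<ge> k}, with inf of the
  empty set = infinity (top of ennreal).\<close>
definition kappa :: "(nat \<Rightarrow> 'a \<Rightarrow> real) \<Rightarrow> (nat \<Rightarrow> 'a \<Rightarrow> real) \<Rightarrow> real \<Rightarrow> real \<Rightarrow> nat \<Rightarrow> 'a \<Rightarrow> ennreal" where
  "kappa X Y \<mu> \<epsilon> s \<omega> =
     (INF k \<in> {k::nat. 1 \<le> k \<and> (\<forall>n\<ge>k. \<bar>arrival X Y s (n + 1) \<omega>\<bar> \<ge> real n * (\<mu> - \<epsilon>) / real s)}.
        of_nat k)"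

end

theory Submission
  imports Defs
begin
lemma exp_neg_quad: fixes x :: real assumes "0 \<le> x" shows "exp (- x) \<le> 1 - x + x^2/2"
proof -
  have "(\<lambda>t. exp (- t) - (1 - t + t^2/2)) x \<le> (\<lambda>t. exp (- t) - (1 - t + t^2/2)) 0"
  proof (rule DERIV_nonpos_imp_nonincreasing[OF assms])
    fix t :: real assume "0 \<le> t" "t \<le> x"
    show "\<exists>y. DERIV (\<lambda>t. exp (- t) - (1 - t + t^2/2)) t :> y \<and> y \<le> 0"
      apply (rule exI[of _ "- exp (- t) - (- 1 + t)"])
      apply (intro conjI)
       apply (auto intro!: derivative_eq_intros)
      using exp_ge_add_one_self[of "-t"] by linarith
  qed
  then show ?thesis by simp
qed

lemma sq_le_exp: fixes t :: real assumes "0 \<le> t" shows "t^2/2 \<le> exp t"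
proof -
  have "(\<lambda>t. exp t - (1 + t + t^2/2)) 0 \<le> (\<lambda>t. exp t - (1 + t + t^2/2)) t"
  proof (rule DERIV_nonneg_imp_nondecreasing[OF assms])
    fix x :: real assume "0 \<le> x" "x \<le> t"
    show "\<exists>y. DERIV (\<lambda>t. exp t - (1 + t + t^2/2)) x :> y \<and> y \<ge> 0"
      using exp_ge_add_one_self[of "x"]
      by (intro exI[of _ "exp x - (1 + x)"]) (auto intro!: derivative_eq_intros)
  qed
  then show ?thesis using assms by simp
qed

lemma summable_n_pow: fixes r :: real assumes "0 \<le> r" "r < 1" shows "summable (\<lambda>n. real n * r^n)"
proof -
  have "summable (\<lambda>n. of_nat (Suc n) * r ^ n)"
    using geometric_deriv_sums[of r] assms sums_summable by auto
  then show ?thesis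
    by (rule summable_comparison_test'[where N=0]) (use assms in \<open>auto intro: mult_right_mono\<close>)
qed

lemma ennreal_all_nat_top: fixes x :: ennreal assumes "\<And>K::nat. of_nat K \<le> x" shows "x = top"
proof (rule ccontr)
  assume "x \<noteq> top"
  then obtain r where r: "x = ennreal r" "r \<ge> 0" by (cases x) auto
  obtain K :: nat where K: "r < real K" using reals_Archimedean2 by blast
  show False using assms[of K] r K by (simp add: ennreal_of_nat_eq_real_of_nat)
qed

lemma ennreal_le_suminf: fixes f :: "nat \<Rightarrow> ennreal" shows "f n \<le> suminf f"
  using ennreal_suminf_lessD[of f "f n" n] by (metis less_irrefl not_le)
lemma kappa_bound:
  fixes X Y :: "nat \<Rightarrow> 'a \<Rightarrow> real"
  assumes Y0: "0 \<le> Y s \<omega>" and s: "1 \<le> s" and th: "0 < \<theta>" and me: "0 \<le> \<mu> - \<epsilon>"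
  shows "kappa X Y \<mu> \<epsilon> s \<omega> \<le> 1 + (\<Sum>n. ennreal (real n * exp (\<theta> * real n * (\<mu> - \<epsilon>)))
           * (\<Prod>i<n. ennreal (exp (- \<theta> * X i \<omega>))))"
    (is "_ \<le> 1 + ?T")
proof -
  define bad where "bad n \<longleftrightarrow> (\<Sum>i<n. X i \<omega>) < real n * (\<mu> - \<epsilon>)" for n
  define t where "t n = ennreal (real n * exp (\<theta> * real n * (\<mu> - \<epsilon>)))
           * (\<Prod>i<n. ennreal (exp (- \<theta> * X i \<omega>)))" for n
  have tT: "t n \<le> ?T" for n unfolding t_def by (rule ennreal_le_suminf)
  have t_bad: "of_nat n \<le> t n" if "bad n" for n
  proof -
    have "t n = ennreal (real n * exp (\<theta> * (real n * (\<mu> - \<epsilon>) - (\<Sum>i<n. X i \<omega>))))"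
    proof -
      have "(\<Prod>i<n. ennreal (exp (- \<theta> * X i \<omega>))) = ennreal (\<Prod>i<n. exp (- \<theta> * X i \<omega>))"
        by (rule prod_ennreal) auto
      also have "(\<Prod>i<n. exp (- \<theta> * X i \<omega>)) = exp (\<Sum>i<n. - \<theta> * X i \<omega>)"
        by (simp add: exp_sum)
      finally have p: "(\<Prod>i<n. ennreal (exp (- \<theta> * X i \<omega>))) = ennreal (exp (\<Sum>i<n. - \<theta> * X i \<omega>))" .
      have "exp (\<theta> * real n * (\<mu> - \<epsilon>)) * exp (\<Sum>i<n. - \<theta> * X i \<omega>)
            = exp (\<theta> * (real n * (\<mu> - \<epsilon>) - (\<Sum>i<n. X i \<omega>)))"
        by (simp add: exp_add[symmetric] sum_negf sum_distrib_left[symmetric] right_diff_distrib)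
      then show ?thesis unfolding t_def p
        by (simp add: ennreal_mult''[symmetric] mult.assoc)
    qed
    also have "\<dots> \<ge> ennreal (real n * 1)"
      using that th unfolding bad_def
      by (intro ennreal_leI mult_left_mono) auto
    finally show ?thesis by (simp add: ennreal_of_nat_eq_real_of_nat)
  qed
  have kK: "kappa X Y \<mu> \<epsilon> s \<omega> \<le> of_nat K" if K: "1 \<le> K" "\<And>n. K \<le> n \<Longrightarrow> \<not> bad n" for K
    unfolding kappa_def
  proof (rule INF_lower2[of K], safe)
    show "1 \<le> K" by fact
    fix n assume "K \<le> n"
    then have nb: "real n * (\<mu> - \<epsilon>) \<le> (\<Sum>i<n. X i \<omega>)" using K(2) unfolding bad_def by force
    have "0 \<le> real n * (\<mu> - \<epsilon>)" using me by simp
    have sp: "0 < real s" using s by simp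
    have eq: "\<bar>arrival X Y s (n + 1) \<omega>\<bar> = Y s \<omega> + (\<Sum>i<n. X i \<omega>) / real s"
    proof -
      have "0 \<le> (\<Sum>i<n. X i \<omega>) / real s" using nb \<open>0 \<le> real n * (\<mu> - \<epsilon>)\<close> sp by simp
      then show ?thesis unfolding arrival_def using Y0 by simp
    qed
    show "real n * (\<mu> - \<epsilon>) / real s \<le> \<bar>arrival X Y s (n + 1) \<omega>\<bar>"
      unfolding eq using Y0 nb sp
      by (smt (verit, ccfv_SIG) divide_right_mono)
  qed
  show ?thesis
  proof (cases "\<exists>K. \<forall>n\<ge>K. \<not> bad n")
    case True
    then obtain K where K: "\<And>n. K \<le> n \<Longrightarrow> \<not> bad n" by blast
    show ?thesis
    proof (cases "\<exists>n. bad n")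
      case False
      then have "kappa X Y \<mu> \<epsilon> s \<omega> \<le> of_nat 1" by (intro kK) auto
      then show ?thesis by (simp add: order_trans[OF _ add_increasing2])
    next
      case True
      define B where "B = {n. bad n}"
      have fB: "finite B" unfolding B_def
        by (rule finite_subset[of _ "{..<K}"]) (use K not_le in auto)
      have neB: "B \<noteq> {}" using True B_def by auto
      define N where "N = Max B"
      have bN: "bad N" using Max_in[OF fB neB] unfolding N_def B_def by auto
      have "kappa X Y \<mu> \<epsilon> s \<omega> \<le> of_nat (N + 1)"
      proof (rule kK)
        fix n assume "N + 1 \<le> n"
        then show "\<not> bad n" using Max_ge[OF fB, of n] unfolding N_def B_def by auto
      qed simp
      also have "\<dots> = 1 + of_nat N" by simp
      also have "\<dots> \<le> 1 + ?T" using t_bad[OF bN] tT[of N] by (intro add_left_mono) auto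
      finally show ?thesis .
    qed
  next
    case False
    have "?T = top"
    proof (rule ennreal_all_nat_top)
      fix K :: nat
      obtain n where "K \<le> n" "bad n" using False by auto
      then have "of_nat K \<le> (of_nat n :: ennreal)" by simp
      also have "\<dots> \<le> t n" using t_bad \<open>bad n\<close> by blast
      also have "\<dots> \<le> ?T" by (rule tT)
      finally show "of_nat K \<le> ?T" .
    qed
    then show ?thesis by simp
  qed
qed
theorem mainTheorem12:
  fixes M :: "'a measure" and X :: "nat \<Rightarrow> 'a \<Rightarrow> real" and Y :: "nat \<Rightarrow> 'a \<Rightarrow> real"
    and \<mu> \<epsilon> :: real
  assumes "prob_space M"
    and indep: "\<And>s. s \<ge> 1 \<Longrightarrow> prob_space.indep_vars M (\<lambda>_. borel)
                 (\<lambda>i \<omega>. case i of None \<Rightarrow> Y s \<omega> | Some n \<Rightarrow> X n \<omega>) UNIV"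
    and ident: "\<And>n. distr M borel (X n) = distr M borel (X 0)"
    and pos: "\<And>n \<omega>. \<omega> \<in> space M \<Longrightarrow> X n \<omega> > 0"
    and integ: "integrable M (X 0)"
    and mean: "integral\<^sup>L M (X 0) = \<mu>"
    and \<mu>pos: "0 < \<mu>"
    and expmom: "\<exists>\<theta>>0. integrable M (\<lambda>\<omega>. exp (\<theta> * X 0 \<omega>))"
    and excess: "\<And>s. s \<ge> 1 \<Longrightarrow> distributed M lborel (Y s)
                    (stat_excess_density M (\<lambda>\<omega>. X 0 \<omega> / real s))"
    and \<epsilon>: "0 < \<epsilon>" "\<epsilon> < \<mu>"
  shows "\<exists>C::real. eventually (\<lambda>s. (\<integral>\<^sup>+ \<omega>. kappa X Y \<mu> \<epsilon> s \<omega> \<partial>M) \<le> ennreal (C * real s))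
                     sequentially"
proof -
  interpret P: prob_space M by fact
  have ind1: "P.indep_vars (\<lambda>_. borel) (\<lambda>i \<omega>. case i of None \<Rightarrow> Y 1 \<omega> | Some n \<Rightarrow> X n \<omega>) UNIV"
    using indep[of 1] by simp
  have Xm[measurable]: "X n \<in> borel_measurable M" for n
  proof -
    have "\<forall>i\<in>UNIV. (\<lambda>\<omega>. case i of None \<Rightarrow> Y 1 \<omega> | Some n \<Rightarrow> X n \<omega>) \<in> measurable M borel"
      using ind1 unfolding P.indep_vars_def by blast
    from this[rule_format, of "Some n"] show ?thesis by simp
  qed
  obtain \<theta>0 where th0: "\<theta>0 > 0" and iexp: "integrable M (\<lambda>\<omega>. exp (\<theta>0 * X 0 \<omega>))"
    using expmom by blast
  have int2: "integrable M (\<lambda>\<omega>. (X 0 \<omega>)^2)"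
  proof (rule Bochner_Integration.integrable_bound)
    show "integrable M (\<lambda>\<omega>. 2 / \<theta>0^2 * exp (\<theta>0 * X 0 \<omega>))"
      using iexp by (rule integrable_mult_right)
    show "AE \<omega> in M. norm ((X 0 \<omega>)^2) \<le> norm (2 / \<theta>0^2 * exp (\<theta>0 * X 0 \<omega>))"
    proof (intro AE_I2)
      fix \<omega> assume "\<omega> \<in> space M"
      then have "0 \<le> \<theta>0 * X 0 \<omega>" using pos th0 by (simp add: less_imp_le)
      from sq_le_exp[OF this] have "(\<theta>0 * X 0 \<omega>)^2 \<le> 2 * exp (\<theta>0 * X 0 \<omega>)" by simp
      then have "(X 0 \<omega>)^2 \<le> 2 / \<theta>0^2 * exp (\<theta>0 * X 0 \<omega>)"
        using th0 by (simp add: field_simps power_mult_distrib)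
      then show "norm ((X 0 \<omega>)^2) \<le> norm (2 / \<theta>0^2 * exp (\<theta>0 * X 0 \<omega>))" by simp
    qed
  qed simp
  define V where "V = (\<integral>\<omega>. (X 0 \<omega>)^2 \<partial>M)"
  have V0: "0 \<le> V" unfolding V_def by simp
  define \<theta> where "\<theta> = \<epsilon> / (V + 1)"
  have th: "0 < \<theta>" unfolding \<theta>_def using \<epsilon> V0 by simp
  define q where "q = - \<theta> * \<mu> + \<theta>^2 * V / 2"
  define \<phi> where "\<phi> = (\<integral>\<^sup>+\<omega>. ennreal (exp (- \<theta> * X 0 \<omega>)) \<partial>M)"
  have phi_le: "\<phi> \<le> ennreal (exp q)"
  proof -
    have "\<phi> \<le> (\<integral>\<^sup>+\<omega>. ennreal (1 - \<theta> * X 0 \<omega> + \<theta>^2 / 2 * (X 0 \<omega>)^2) \<partial>M)"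
      unfolding \<phi>_def
    proof (intro nn_integral_mono ennreal_leI)
      fix \<omega> assume "\<omega> \<in> space M"
      then have "0 \<le> \<theta> * X 0 \<omega>" using pos th by (simp add: less_imp_le)
      from exp_neg_quad[OF this] show "exp (- \<theta> * X 0 \<omega>) \<le> 1 - \<theta> * X 0 \<omega> + \<theta>^2 / 2 * (X 0 \<omega>)^2"
        by (simp add: power_mult_distrib)
    qed
    also have "\<dots> = ennreal (\<integral>\<omega>. (1 - \<theta> * X 0 \<omega> + \<theta>^2 / 2 * (X 0 \<omega>)^2) \<partial>M)"
    proof (rule nn_integral_eq_integral)
      show "integrable M (\<lambda>\<omega>. 1 - \<theta> * X 0 \<omega> + \<theta>^2 / 2 * (X 0 \<omega>)^2)"
        using integ int2 by (intro Bochner_Integration.integrable_add Bochner_Integration.integrable_diff integrable_mult_right) auto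
      show "AE \<omega> in M. 0 \<le> 1 - \<theta> * X 0 \<omega> + \<theta>^2 / 2 * (X 0 \<omega>)^2"
      proof (intro AE_I2)
        fix \<omega> assume "\<omega> \<in> space M"
        then have "0 \<le> \<theta> * X 0 \<omega>" using pos th by (simp add: less_imp_le)
        from exp_neg_quad[OF this] have "exp (- (\<theta> * X 0 \<omega>)) \<le> 1 - \<theta> * X 0 \<omega> + \<theta>^2 / 2 * (X 0 \<omega>)^2"
          by (simp add: power_mult_distrib)
        moreover have "0 < exp (- (\<theta> * X 0 \<omega>))" by simp
        ultimately show "0 \<le> 1 - \<theta> * X 0 \<omega> + \<theta>^2 / 2 * (X 0 \<omega>)^2" by linarith
      qed
    qed
    also have "(\<integral>\<omega>. (1 - \<theta> * X 0 \<omega> + \<theta>^2 / 2 * (X 0 \<omega>)^2) \<partial>M) = 1 + q"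
    proof -
      have i1: "integrable M (\<lambda>\<omega>. 1 - \<theta> * X 0 \<omega>)" using integ by auto
      have i2: "integrable M (\<lambda>\<omega>. \<theta>^2 / 2 * (X 0 \<omega>)^2)" using int2 by auto
      have "(\<integral>\<omega>. (1 - \<theta> * X 0 \<omega> + \<theta>^2 / 2 * (X 0 \<omega>)^2) \<partial>M)
          = (\<integral>\<omega>. (1 - \<theta> * X 0 \<omega>) \<partial>M) + (\<integral>\<omega>. \<theta>^2 / 2 * (X 0 \<omega>)^2 \<partial>M)"
        using i1 i2 by (rule Bochner_Integration.integral_add)
      also have "(\<integral>\<omega>. (1 - \<theta> * X 0 \<omega>) \<partial>M) = 1 - \<theta> * \<mu>"
        using integ mean by (subst Bochner_Integration.integral_diff) (auto simp: P.prob_space)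
      also have "(\<integral>\<omega>. \<theta>^2 / 2 * (X 0 \<omega>)^2 \<partial>M) = \<theta>^2 / 2 * V"
        unfolding V_def by simp
      finally show ?thesis unfolding q_def by simp
    qed
    also have "ennreal (1 + q) \<le> ennreal (exp q)"
      by (intro ennreal_leI) (rule exp_ge_add_one_self)
    finally show ?thesis .
  qed
  define r where "r = exp (- \<theta> * \<epsilon> + \<theta>^2 * V / 2)"
  have r0: "0 \<le> r" and r1: "r < 1"
  proof -
    show "0 \<le> r" unfolding r_def by simp
    have "\<theta> * V \<le> \<epsilon>" unfolding \<theta>_def using V0 \<epsilon> by (simp add: field_simps)
    then have "\<theta> * (\<theta> * V) \<le> \<theta> * \<epsilon>" using th by (intro mult_left_mono) auto
    then have "- \<theta> * \<epsilon> + \<theta>^2 * V / 2 < 0" using th \<epsilon> by (simp add: power2_eq_square)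
    then show "r < 1" unfolding r_def by simp
  qed
  define S where "S = (\<Sum>n. real n * r^n)"
  have sumS: "summable (\<lambda>n. real n * r^n)" using summable_n_pow r0 r1 by blast
  have S0: "0 \<le> S" unfolding S_def using sumS r0 by (intro suminf_nonneg) auto
  define c where "c n = ennreal (real n * exp (\<theta> * real n * (\<mu> - \<epsilon>)))" for n
  define F where "F \<omega> = (\<Sum>n. c n * (\<Prod>i<n. ennreal (exp (- \<theta> * X i \<omega>))))" for \<omega>
  have prodint: "(\<integral>\<^sup>+\<omega>. (\<Prod>i<n. ennreal (exp (- \<theta> * X i \<omega>))) \<partial>M) = \<phi>^n" for n
  proof -
    define Z where "Z i \<omega> = ennreal (exp (- \<theta> * (case i of None \<Rightarrow> Y 1 \<omega> | Some n \<Rightarrow> X n \<omega>)))" for i \<omega>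
    have indZ: "P.indep_vars (\<lambda>_. borel) Z UNIV"
      unfolding Z_def
      by (rule P.indep_vars_compose2[OF ind1, where Y="\<lambda>_ x. ennreal (exp (- \<theta> * x))"]) auto
    have indZ': "P.indep_vars (\<lambda>_. borel) Z (Some ` {..<n})"
      using indZ by (rule P.indep_vars_subset) auto
    have "(\<integral>\<^sup>+\<omega>. (\<Prod>i\<in>Some ` {..<n}. Z i \<omega>) \<partial>M) = (\<Prod>i\<in>Some ` {..<n}. \<integral>\<^sup>+\<omega>. Z i \<omega> \<partial>M)"
      by (rule P.indep_vars_nn_integral[OF _ indZ']) auto
    moreover have "(\<Prod>i\<in>Some ` {..<n}. Z i \<omega>) = (\<Prod>i<n. ennreal (exp (- \<theta> * X i \<omega>)))" for \<omega>
      by (subst prod.reindex) (auto simp: Z_def)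
    moreover have "(\<Prod>i\<in>Some ` {..<n}. \<integral>\<^sup>+\<omega>. Z i \<omega> \<partial>M) = (\<Prod>i<n. \<integral>\<^sup>+\<omega>. ennreal (exp (- \<theta> * X i \<omega>)) \<partial>M)"
      by (subst prod.reindex) (auto intro!: prod.cong nn_integral_cong simp: Z_def)
    moreover have "(\<integral>\<^sup>+\<omega>. ennreal (exp (- \<theta> * X i \<omega>)) \<partial>M) = \<phi>" for i
    proof -
      have "(\<integral>\<^sup>+\<omega>. ennreal (exp (- \<theta> * X i \<omega>)) \<partial>M) = (\<integral>\<^sup>+x. ennreal (exp (- \<theta> * x)) \<partial>distr M borel (X i))"
        by (subst nn_integral_distr) auto
      also have "\<dots> = (\<integral>\<^sup>+x. ennreal (exp (- \<theta> * x)) \<partial>distr M borel (X 0))"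
        by (simp add: ident[of i])
      also have "\<dots> = \<phi>" unfolding \<phi>_def
        by (subst nn_integral_distr) auto
      finally show ?thesis .
    qed
    ultimately show ?thesis by simp
  qed
  have intF: "(\<integral>\<^sup>+\<omega>. F \<omega> \<partial>M) \<le> ennreal S"
  proof -
    have "(\<integral>\<^sup>+\<omega>. F \<omega> \<partial>M) = (\<Sum>n. \<integral>\<^sup>+\<omega>. c n * (\<Prod>i<n. ennreal (exp (- \<theta> * X i \<omega>))) \<partial>M)"
      unfolding F_def by (rule nn_integral_suminf) auto
    also have "\<dots> = (\<Sum>n. c n * \<phi>^n)"
      by (subst nn_integral_cmult) (auto simp: prodint[simplified])
    also have "\<dots> \<le> (\<Sum>n. ennreal (real n * r^n))"
    proof (intro suminf_le summableI)
      fix n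
      have "c n * \<phi>^n \<le> c n * ennreal (exp q)^n"
        by (intro mult_left_mono power_mono phi_le) auto
      also have "\<dots> = ennreal (real n * (exp (\<theta> * real n * (\<mu> - \<epsilon>)) * exp q ^ n))"
        unfolding c_def by (simp add: ennreal_power ennreal_mult''[symmetric] mult.assoc)
      also have "exp (\<theta> * real n * (\<mu> - \<epsilon>)) * exp q ^ n = r^n"
        unfolding r_def q_def exp_of_nat_mult[symmetric] exp_add[symmetric]
        by (simp add: algebra_simps)
      finally show "c n * \<phi>^n \<le> ennreal (real n * r^n)" .
    qed
    also have "\<dots> = ennreal S" unfolding S_def
      using sumS r0 by (intro suminf_ennreal2) auto
    finally show ?thesis .
  qed
  have AEY: "AE \<omega> in M. 0 \<le> Y s \<omega>" if s: "1 \<le> s" for s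
  proof -
    have D: "distributed M lborel (Y s) (stat_excess_density M (\<lambda>\<omega>. X 0 \<omega> / real s))"
      using excess s by blast
    have "AE x in distr M lborel (Y s). 0 \<le> x"
      unfolding distributed_distr_eq_density[OF D] AE_density[OF distributed_borel_measurable[OF D]]
      by (intro AE_I2) (auto simp: stat_excess_density_def split: if_splits)
    then show ?thesis by (rule AE_distrD[OF distributed_measurable[OF D]])
  qed
  have me: "0 \<le> \<mu> - \<epsilon>" using \<epsilon> by simp
  show ?thesis
  proof (intro exI[of _ "1 + S"] eventually_sequentiallyI[of 1])
    fix s :: nat assume s: "1 \<le> s"
    have "(\<integral>\<^sup>+ \<omega>. kappa X Y \<mu> \<epsilon> s \<omega> \<partial>M) \<le> (\<integral>\<^sup>+ \<omega>. (1 + F \<omega>) \<partial>M)"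
    proof (rule nn_integral_mono_AE)
      show "AE \<omega> in M. kappa X Y \<mu> \<epsilon> s \<omega> \<le> 1 + F \<omega>"
        using AEY[OF s] by eventually_elim (unfold F_def c_def, rule kappa_bound[OF _ s th me])
    qed
    also have "\<dots> = 1 + (\<integral>\<^sup>+ \<omega>. F \<omega> \<partial>M)"
    proof -
      have Fm: "F \<in> borel_measurable M" unfolding F_def c_def by measurable
      show ?thesis by (subst nn_integral_add) (auto simp: Fm P.emeasure_space_1)
    qed
    also have "\<dots> \<le> 1 + ennreal S" using intF by (rule add_left_mono)
    also have "\<dots> = ennreal (1 + S)" using S0 by simp
    also have "\<dots> \<le> ennreal ((1 + S) * real s)"
      using S0 s by (intro ennreal_leI) (simp add: mult_le_cancel_left1 )
    finally show "(\<integral>\<^sup>+ \<omega>. kappa X Y \<mu> \<epsilon> s \<omega> \<partial>M) \<le> ennreal ((1 + S) * real s)" .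
  qed
qed

end
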